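(* Let $\mathbb{F}\in\{\mathbb{R},\mathbb{C}\}$ and let $p,q,r,s\in\mathbb{F}$ with $r\neq s^2$, $q\neq s^3$, or $p\neq s^4$. Let $\delta$ be the space quartic in $\mathbb{F}\mathbb{P}^3$ parametrised by $t\mapsto[t^4-p,\,t^3+q,\,t^2-r,\,t+s]$, $t\in\mathbb{F}$. A plane intersects $\delta$ in four points parametrised by $t_1,t_2,t_3,t_4$, counting multiplicity, if and only if $$F(t_1,t_2,t_3,t_4):=t_1t_2t_3t_4+s\sum_{i<j<k}t_it_jt_k+r\sum_{i<j}t_it_j+q\sum_i t_i+p=0.$$ In particular, if $t_1,t_2,t_3$ are distinct, then $F(t_1,t_1,t_2,t_3)=0$ if and only if the plane through the points with parameters $t_1,t_2,t_3$ intersects $\delta$ only in those three points and contains the tangent line of $\delta$ at $t_1$.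
   Context: A space quartic is an irreducible non-planar curve of degree $4$ in projective $3$-space. *)

theory Defs
  imports "HOL-Computational_Algebra.Polynomial"
begin

text \<open>Homogeneous coordinates in FP^3 are quadruples; a plane is given by a
  nonzero coefficient quadruple a, and a point x lies on it iff
  pairing a x = 0.\<close>

type_synonym 'a quad = "'a \<times> 'a \<times> 'a \<times> 'a"

fun pairing :: "'a::comm_ring_1 quad \<Rightarrow> 'a quad \<Rightarrow> 'a" where
  "pairing (a0, a1, a2, a3) (x0, x1, x2, x3) = a0 * x0 + a1 * x1 + a2 * x2 + a3 * x3"

definition delta :: "'a::comm_ring_1 \<Rightarrow> 'a \<Rightarrow> 'a \<Rightarrow> 'a \<Rightarrow> 'a \<Rightarrow> 'a quad" where
  "delta p q r s t = (t ^ 4 - p, t ^ 3 + q, t ^ 2 - r, t + s)"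

definition delta_tangent :: "'a::comm_ring_1 \<Rightarrow> 'a quad" where
  "delta_tangent t = (4 * t ^ 3, 3 * t ^ 2, 2 * t, 1)"

definition delta_infinity :: "'a::comm_ring_1 quad" where
  "delta_infinity = (1, 0, 0, 0)"

text \<open>The intersection polynomial of the plane a with the curve:
  its value at t is pairing a (delta p q r s t).\<close>
fun plane_poly :: "'a::comm_ring_1 \<Rightarrow> 'a \<Rightarrow> 'a \<Rightarrow> 'a \<Rightarrow> 'a quad \<Rightarrow> 'a poly" where
  "plane_poly p q r s (a0, a1, a2, a3) =
     smult a0 [:-p, 0, 0, 0, 1:] + smult a1 [:q, 0, 0, 1:] + smult a2 [:-r, 0, 1:] + smult a3 [:s, 1:]"

text \<open>The plane a meets the quartic in exactly the four points with parameters
  t1,t2,t3,t4, counted with multiplicity: the intersection polynomial has degree 4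
  (so the point at infinity is not on the plane) and its root multiplicities are
  given by the multiset {t1,t2,t3,t4}.\<close>
definition meets_in_four :: "'a::idom \<Rightarrow> 'a \<Rightarrow> 'a \<Rightarrow> 'a \<Rightarrow> 'a quad \<Rightarrow> 'a \<Rightarrow> 'a \<Rightarrow> 'a \<Rightarrow> 'a \<Rightarrow> bool" where
  "meets_in_four p q r s a t1 t2 t3 t4 \<longleftrightarrow>
     a \<noteq> (0, 0, 0, 0) \<and> degree (plane_poly p q r s a) = 4 \<and>
     (\<forall>x. order x (plane_poly p q r s a) = count {#t1, t2, t3, t4#} x)"

definition Fq :: "'a::comm_ring_1 \<Rightarrow> 'a \<Rightarrow> 'a \<Rightarrow> 'a \<Rightarrow> 'a \<Rightarrow> 'a \<Rightarrow> 'a \<Rightarrow> 'a \<Rightarrow> 'a" where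
  "Fq p q r s t1 t2 t3 t4 =
     t1 * t2 * t3 * t4
     + s * (t1 * t2 * t3 + t1 * t2 * t4 + t1 * t3 * t4 + t2 * t3 * t4)
     + r * (t1 * t2 + t1 * t3 + t1 * t4 + t2 * t3 + t2 * t4 + t3 * t4)
     + q * (t1 + t2 + t3 + t4)
     + p"

end

theory Submission
  imports Defs
begin

lemma lin_order: "order x [:-t,1::'a::idom:] = (if x = t then 1 else 0)"
proof (cases "x = t")
  case True then show ?thesis using order_power_n_n[of t 1] by simp
next
  case False
  then have "poly [:-t,1:] x \<noteq> 0" by simp
  then show ?thesis using False by (simp add: order_0I)
qed

lemma dvd_from_orders:
  fixes P :: "'a::idom poly"
  shows "P \<noteq> 0 \<Longrightarrow> \<forall>x. count M x \<le> order x P \<Longrightarrow> (\<Prod>t\<in>#M. [:-t,1:]) dvd P"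
proof (induction M arbitrary: P)
  case empty then show ?case by simp
next
  case (add t M)
  have "1 \<le> count (add_mset t M) t" by simp
  also have "\<dots> \<le> order t P" using add.prems(2) by blast
  finally have "order t P \<noteq> 0" by simp
  then have "poly P t = 0" using add.prems(1) order_root by blast
  then have "[:-t,1:] dvd P" by (simp add: poly_eq_0_iff_dvd)
  then obtain Q where Q: "P = [:-t,1:] * Q" by (rule dvdE)
  have Q0: "Q \<noteq> 0" using Q add.prems(1) by auto
  have "\<forall>x. count M x \<le> order x Q"
  proof
    fix x
    have "order x P = order x [:-t,1:] + order x Q"
      using add.prems(1) unfolding Q by (rule order_mult)
    moreover have "count (add_mset t M) x \<le> order x P" using add.prems(2) by blast
    ultimately show "count M x \<le> order x Q" by (auto simp: lin_order split: if_splits)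
  qed
  then have "(\<Prod>t\<in>#M. [:-t,1:]) dvd Q" using add.IH Q0 by blast
  then have "[:-t,1:] * (\<Prod>t\<in>#M. [:-t,1:]) dvd [:-t,1:] * Q" by (rule mult_dvd_mono[OF dvd_refl])
  then show ?case by (simp only: Q image_mset_add_mset prod_mset.add_mset)
qed

lemma prod4: "(\<Prod>t\<in># {#t1, t2, t3, t4#}. [:-t,1:]) =
  [: t1*t2*t3*t4, -(t1*t2*t3 + t1*t2*t4 + t1*t3*t4 + t2*t3*t4), t1*t2 + t1*t3 + t1*t4 + t2*t3 + t2*t4 + t3*t4, -(t1+t2+t3+t4), 1::'a::comm_ring_1:]"
  apply simp
  apply (intro conjI)
   apply (simp add: algebra_simps)
  apply (simp add: algebra_simps)
  done



lemma pp: "plane_poly p q r s (a0,a1,a2,a3) = [: -a0*p + a1*q - a2*r + a3*s, a3, a2, a1, a0 :]"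
  by simp




lemma cubic_zero:
  fixes b c d e t1 t2 t3 :: "'a::field"
  assumes d12: "t1 \<noteq> t2" and d13: "t1 \<noteq> t3" and d23: "t2 \<noteq> t3"
    and g1: "b*t1^3 + c*t1^2 + d*t1 + e = 0"
    and g2: "b*t2^3 + c*t2^2 + d*t2 + e = 0"
    and g3: "b*t3^3 + c*t3^2 + d*t3 + e = 0"
    and g': "3*b*t1^2 + 2*c*t1 + d = 0"
  shows "b = 0 \<and> c = 0 \<and> d = 0 \<and> e = 0"
proof -
  have "(t1 - t2) * (b*(t1^2+t1*t2+t2^2) + c*(t1+t2) + d) = 0" using g1 g2 by algebra
  then have x12: "b*(t1^2+t1*t2+t2^2) + c*(t1+t2) + d = 0" using d12 by simp
  have "(t1 - t3) * (b*(t1^2+t1*t3+t3^2) + c*(t1+t3) + d) = 0" using g1 g3 by algebra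
  then have x13: "b*(t1^2+t1*t3+t3^2) + c*(t1+t3) + d = 0" using d13 by simp
  have "(t2 - t1) * (b*(t2 + 2*t1) + c) = 0" using x12 g' by algebra
  then have y2: "b*(t2 + 2*t1) + c = 0" using d12 by simp
  have "(t3 - t1) * (b*(t3 + 2*t1) + c) = 0" using x13 g' by algebra
  then have y3: "b*(t3 + 2*t1) + c = 0" using d13 by simp
  have "b * (t2 - t3) = 0" using y2 y3 by algebra
  then have b: "b = 0" using d23 by simp
  then have c: "c = 0" using y2 by simp
  then have d: "d = 0" using g' b by simp
  then have "e = 0" using g1 b c by simp
  then show ?thesis using b c d by simp
qed

lemma part1_fwd:
  fixes p q r s :: "'a::field"
  assumes m: "meets_in_four p q r s a t1 t2 t3 t4"
  shows "Fq p q r s t1 t2 t3 t4 = 0"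
proof -
  obtain a0 a1 a2 a3 where a: "a = (a0,a1,a2,a3)" by (cases a) auto
  define P where "P = plane_poly p q r s a"
  have P: "P = [: -a0*p + a1*q - a2*r + a3*s, a3, a2, a1, a0 :]" using pp a P_def by simp
  have deg: "degree P = 4" and ord: "\<forall>x. order x P = count {#t1, t2, t3, t4#} x"
    using m unfolding meets_in_four_def P_def by auto
  have P0: "P \<noteq> 0" using deg by auto
  have "(\<Prod>t\<in># {#t1, t2, t3, t4#}. [:-t,1:]) dvd P"
    by (rule dvd_from_orders[OF P0]) (simp add: ord)
  then obtain K where K: "P = [: t1*t2*t3*t4, -(t1*t2*t3 + t1*t2*t4 + t1*t3*t4 + t2*t3*t4), t1*t2 + t1*t3 + t1*t4 + t2*t3 + t2*t4 + t3*t4, -(t1+t2+t3+t4), 1:] * K"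
    (is "P = ?L * K") unfolding prod4 by (elim dvdE)
  have K0: "K \<noteq> 0" using K P0 by auto
  have L4: "degree ?L = 4" by simp
  have L0: "?L \<noteq> 0" by simp
  have "degree P = degree ?L + degree K" using K K0 L0 by (metis degree_mult_eq)
  then have "degree K = 0" using deg L4 by simp
  then obtain k where k: "K = [:k:]" by (metis degree_eq_zeroE)
  have PL: "P = smult k ?L" using K k by simp
  have C: "coeff P i = coeff (smult k ?L) i" for i using PL by simp
  have eqs: "-a0*p + a1*q - a2*r + a3*s = k * (t1*t2*t3*t4)"
      "a3 = k * -(t1*t2*t3 + t1*t2*t4 + t1*t3*t4 + t2*t3*t4)"
      "a2 = k * (t1*t2 + t1*t3 + t1*t4 + t2*t3 + t2*t4 + t3*t4)"
      "a1 = k * -(t1+t2+t3+t4)" "a0 = k"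
    using C[of 0] C[of 1] C[of 2] C[of 3] C[of 4] unfolding P by (simp_all add: eval_nat_numeral)
  have "k \<noteq> 0" using K0 k by simp
  moreover have "k * Fq p q r s t1 t2 t3 t4 = 0" unfolding Fq_def using eqs by algebra
  ultimately show ?thesis by simp
qed

lemma part1_bwd:
  fixes p q r s :: "'a::field"
  assumes F: "Fq p q r s t1 t2 t3 t4 = 0"
  shows "meets_in_four p q r s (1, -(t1+t2+t3+t4), t1*t2 + t1*t3 + t1*t4 + t2*t3 + t2*t4 + t3*t4, -(t1*t2*t3 + t1*t2*t4 + t1*t3*t4 + t2*t3*t4)) t1 t2 t3 t4"
proof -
  let ?a = "(1::'a, -(t1+t2+t3+t4), t1*t2 + t1*t3 + t1*t4 + t2*t3 + t2*t4 + t3*t4, -(t1*t2*t3 + t1*t2*t4 + t1*t3*t4 + t2*t3*t4))"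
  have "plane_poly p q r s ?a = [: t1*t2*t3*t4, -(t1*t2*t3 + t1*t2*t4 + t1*t3*t4 + t2*t3*t4), t1*t2 + t1*t3 + t1*t4 + t2*t3 + t2*t4 + t3*t4, -(t1+t2+t3+t4), 1:]"
  proof -
    have eq: "(-1)*p + (-(t1+t2+t3+t4))*q - (t1*t2 + t1*t3 + t1*t4 + t2*t3 + t2*t4 + t3*t4)*r + (-(t1*t2*t3 + t1*t2*t4 + t1*t3*t4 + t2*t3*t4))*s = t1*t2*t3*t4"
      using F unfolding Fq_def by algebra
    show ?thesis by (simp only: pp eq)
  qed
  also have "\<dots> = [:-t1,1:] * ([:-t2,1:] * ([:-t3,1:] * [:-t4,1:]))"
    using prod4[of t1 t2 t3 t4] by simp
  finally have PP: "plane_poly p q r s ?a = [:-t1,1:] * ([:-t2,1:] * ([:-t3,1:] * [:-t4,1:]))" .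
  have nz: "[:-t,1:] \<noteq> (0::'a poly)" for t by simp
  have "order x (plane_poly p q r s ?a) = count {#t1, t2, t3, t4#} x" for x
    unfolding PP
    apply (subst order_mult, simp)+
    apply (simp add: lin_order)
    done
  moreover have "degree (plane_poly p q r s ?a) = 4" unfolding PP by (simp add: degree_mult_eq)
  ultimately show ?thesis unfolding meets_in_four_def by simp
qed


lemma pair_delta: "pairing (a0,a1,a2,a3) (delta p q r s t) = a0*t^4 + a1*t^3 + a2*t^2 + a3*t + (-a0*p + a1*q - a2*r + a3*s)"
  by (simp add: delta_def algebra_simps)

lemma part2_fwd:
  fixes p q r s :: "'a::field"
  assumes F: "Fq p q r s t1 t1 t2 t3 = 0"
  shows "\<exists>a. a \<noteq> (0, 0, 0, 0)
                  \<and> pairing a (delta p q r s t1) = 0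
                  \<and> pairing a (delta p q r s t2) = 0
                  \<and> pairing a (delta p q r s t3) = 0
                  \<and> pairing a (delta_tangent t1) = 0
                  \<and> pairing a delta_infinity \<noteq> 0
                  \<and> (\<forall>t. pairing a (delta p q r s t) = 0 \<longrightarrow> t \<in> {t1, t2, t3})"
proof -
  define a where "a = (1::'a, -(t1+t1+t2+t3), t1*t1 + t1*t2 + t1*t3 + t1*t2 + t1*t3 + t2*t3, -(t1*t1*t2 + t1*t1*t3 + t1*t2*t3 + t1*t2*t3))"
  have key: "pairing a (delta p q r s t) = (t-t1)^2*(t-t2)*(t-t3)" for t
  proof -
    have "pairing a (delta p q r s t) = (t-t1)^2*(t-t2)*(t-t3) - Fq p q r s t1 t1 t2 t3"
      unfolding a_def pair_delta Fq_def by algebra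
    then show ?thesis using F by simp
  qed
  have tan: "pairing a (delta_tangent t1) = 0"
    unfolding a_def delta_tangent_def by simp algebra
  have inf: "pairing a delta_infinity \<noteq> 0" unfolding a_def delta_infinity_def by simp
  have roots: "\<forall>t. pairing a (delta p q r s t) = 0 \<longrightarrow> t \<in> {t1, t2, t3}"
    unfolding key by auto
  show ?thesis
    by (rule exI[of _ a]) (simp add: key tan inf roots, simp add: a_def)
qed

lemma part2_bwd:
  fixes p q r s :: "'a::field"
  assumes dist: "distinct [t1, t2, t3]"
    and h1: "pairing a (delta p q r s t1) = 0"
    and h2: "pairing a (delta p q r s t2) = 0"
    and h3: "pairing a (delta p q r s t3) = 0"
    and ht: "pairing a (delta_tangent t1) = 0"
    and hi: "pairing a delta_infinity \<noteq> 0"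
  shows "Fq p q r s t1 t1 t2 t3 = 0"
proof -
  obtain a0 a1 a2 a3 where a: "a = (a0,a1,a2,a3)" by (cases a) auto
  have a0: "a0 \<noteq> 0" using hi a by (simp add: delta_infinity_def)
  define b where "b = a1 + a0*(t1+t1+t2+t3)"
  define c where "c = a2 - a0*(t1*t1 + t1*t2 + t1*t3 + t1*t2 + t1*t3 + t2*t3)"
  define d where "d = a3 + a0*(t1*t1*t2 + t1*t1*t3 + t1*t2*t3 + t1*t2*t3)"
  define e where "e = (-a0*p + a1*q - a2*r + a3*s) - a0*(t1*t1*t2*t3)"
  have g: "pairing a (delta p q r s t) = a0*((t-t1)^2*(t-t2)*(t-t3)) + (b*t^3 + c*t^2 + d*t + e)" for t
    unfolding a pair_delta b_def c_def d_def e_def by algebra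
  have g1: "b*t1^3 + c*t1^2 + d*t1 + e = 0" using h1 g[of t1] by simp
  have g2: "b*t2^3 + c*t2^2 + d*t2 + e = 0" using h2 g[of t2] by simp
  have g3: "b*t3^3 + c*t3^2 + d*t3 + e = 0" using h3 g[of t3] by simp
  have "pairing a (delta_tangent t1) = 3*b*t1^2 + 2*c*t1 + d"
    unfolding a delta_tangent_def b_def c_def d_def by simp algebra
  then have g': "3*b*t1^2 + 2*c*t1 + d = 0" using ht by simp
  have "b = 0 \<and> c = 0 \<and> d = 0 \<and> e = 0"
    using cubic_zero[OF _ _ _ g1 g2 g3 g'] dist by auto
  then have "a0 * Fq p q r s t1 t1 t2 t3 = 0"
    unfolding Fq_def b_def c_def d_def e_def by algebra
  then show ?thesis using a0 by simp
qed

theorem lemma3p2: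
  fixes p q r s :: "'a::real_normed_field"
  assumes "r \<noteq> s ^ 2 \<or> q \<noteq> s ^ 3 \<or> p \<noteq> s ^ 4"
  shows "(\<forall>t1 t2 t3 t4. (\<exists>a. meets_in_four p q r s a t1 t2 t3 t4) \<longleftrightarrow> Fq p q r s t1 t2 t3 t4 = 0)
       \<and> (\<forall>t1 t2 t3. distinct [t1, t2, t3] \<longrightarrow>
            (Fq p q r s t1 t1 t2 t3 = 0 \<longleftrightarrow>
             (\<exists>a. a \<noteq> (0, 0, 0, 0)
                  \<and> pairing a (delta p q r s t1) = 0
                  \<and> pairing a (delta p q r s t2) = 0
                  \<and> pairing a (delta p q r s t3) = 0
                  \<and> pairing a (delta_tangent t1) = 0
                  \<and> pairing a delta_infinity \<noteq> 0
                  \<and> (\<forall>t. pairing a (delta p q r s t) = 0 \<longrightarrow> t \<in> {t1, t2, t3}))))"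
proof (intro conjI allI impI iffI)
  fix t1 t2 t3 t4
  assume "\<exists>a. meets_in_four p q r s a t1 t2 t3 t4"
  then obtain a where "meets_in_four p q r s a t1 t2 t3 t4" by blast
  then show "Fq p q r s t1 t2 t3 t4 = 0" by (rule part1_fwd)
next
  fix t1 t2 t3 t4
  assume "Fq p q r s t1 t2 t3 t4 = 0"
  from part1_bwd[OF this] show "\<exists>a. meets_in_four p q r s a t1 t2 t3 t4" by (rule exI)
next
  fix t1 t2 t3
  assume "Fq p q r s t1 t1 t2 t3 = 0"
  then show "\<exists>a. a \<noteq> (0, 0, 0, 0)
                  \<and> pairing a (delta p q r s t1) = 0
                  \<and> pairing a (delta p q r s t2) = 0
                  \<and> pairing a (delta p q r s t3) = 0
                  \<and> pairing a (delta_tangent t1) = 0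
                  \<and> pairing a delta_infinity \<noteq> 0
                  \<and> (\<forall>t. pairing a (delta p q r s t) = 0 \<longrightarrow> t \<in> {t1, t2, t3})"
    by (rule part2_fwd)
next
  fix t1 t2 t3 :: 'a
  assume "distinct [t1, t2, t3]"
    and "\<exists>a. a \<noteq> (0, 0, 0, 0)
                  \<and> pairing a (delta p q r s t1) = 0
                  \<and> pairing a (delta p q r s t2) = 0
                  \<and> pairing a (delta p q r s t3) = 0
                  \<and> pairing a (delta_tangent t1) = 0
                  \<and> pairing a delta_infinity \<noteq> 0
                  \<and> (\<forall>t. pairing a (delta p q r s t) = 0 \<longrightarrow> t \<in> {t1, t2, t3})"
  then obtain a where "pairing a (delta p q r s t1) = 0" "pairing a (delta p q r s t2) = 0"
     "pairing a (delta p q r s t3) = 0" "pairing a (delta_tangent t1) = 0"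
     "pairing a delta_infinity \<noteq> 0" by blast
  then show "Fq p q r s t1 t1 t2 t3 = 0" using part2_bwd \<open>distinct [t1, t2, t3]\<close> by blast
qed

end
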